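(* Let $F$ be a field of characteristic $0$, let $G$ be a group such that its abelianization $\widetilde G=G/[G,G]$ is finitely generated, and let $A$ be an $F$-vector space endowed with a linear right $G$-action $a\mapsto a^g$. If $\dim_F A^G<\infty$, then $\dim_F \mathcal P_n(G,A)<\infty$ for every $n\in\mathbb Z_+$.
   Context: A right $G$-action on $A$ means maps $a\mapsto a^g$ with $a^{\mathbf e}=a$ and $(a^g)^h=a^{gh}$, where $\mathbf e$ is the identity of $G$; "linear" means each $a\mapsto a^g$ is $F$-linear. $A^G=\{a\in A: a^g=a \ \forall g\in G\}$. For $n\ge 0$, $\mathcal C^n(G,A)$ is the space of normalized $n$-cochains: $\mathcal C^0(G,A)=A$, and for $n\ge1$ it consists of all functions $c:G^n\to A$ with $c(g_1,\dots,g_n)=0$ whenever some $g_i=\mathbf e$. For $n\ge1$ define $d_n:\mathcal C^{n-1}(G,A)\to\mathcal C^n(G,A)$ by $(d_nc)(g_1,\dots,g_n)=[c(g_1,\dots,g_{n-1})]^{g_n}-c(g_1,\dots,g_{n-1})$ (for $n=1$: $(d_1a)(g_1)=a^{g_1}-a$). The iterated difference operators are $D^0=\mathrm{id}_A$ and $D^n=d_nD^{n-1}$ for $n\ge1$. The space of $G$-polynomials (polynomial-like elements) of order at most $n$ is $\mathcal P_n(G,A)=\ker\big(D^{n+1}:A\to\mathcal C^{n+1}(G,A)\big)$. *)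

theory Defs
  imports Main "HOL-Algebra.Algebra"
begin

definition linear_right_action ::
  "('f::field \<Rightarrow> 'a::ab_group_add \<Rightarrow> 'a) \<Rightarrow> ('g, 'b) monoid_scheme \<Rightarrow> ('a \<Rightarrow> 'g \<Rightarrow> 'a) \<Rightarrow> bool" where
  "linear_right_action scale G act \<longleftrightarrow>
     (\<forall>a. act a \<one>\<^bsub>G\<^esub> = a) \<and>
     (\<forall>a. \<forall>g\<in>carrier G. \<forall>h\<in>carrier G. act (act a g) h = act a (g \<otimes>\<^bsub>G\<^esub> h)) \<and>
     (\<forall>g\<in>carrier G. Vector_Spaces.linear scale scale (\<lambda>a. act a g))"

definition invariants :: "('g, 'b) monoid_scheme \<Rightarrow> ('a \<Rightarrow> 'g \<Rightarrow> 'a) \<Rightarrow> 'a set" where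
  "invariants G act = {a. \<forall>g\<in>carrier G. act a g = a}"

text \<open>Iterated difference operator: iter_diff act n a gs is (D^n a)(g_1,...,g_n)
  with g_i = gs (i-1).\<close>
fun iter_diff :: "('a::ab_group_add \<Rightarrow> 'g \<Rightarrow> 'a) \<Rightarrow> nat \<Rightarrow> 'a \<Rightarrow> (nat \<Rightarrow> 'g) \<Rightarrow> 'a" where
  "iter_diff act 0 a gs = a"
| "iter_diff act (Suc n) a gs = act (iter_diff act n a gs) (gs n) - iter_diff act n a gs"

definition poly_elems :: "('g, 'b) monoid_scheme \<Rightarrow> ('a::ab_group_add \<Rightarrow> 'g \<Rightarrow> 'a) \<Rightarrow> nat \<Rightarrow> 'a set" where
  "poly_elems G act n =
     {a. \<forall>gs. (\<forall>i<Suc n. gs i \<in> carrier G) \<longrightarrow> iter_diff act (Suc n) a gs = 0}"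

definition fin_dim :: "('f::field \<Rightarrow> 'a::ab_group_add \<Rightarrow> 'a) \<Rightarrow> 'a set \<Rightarrow> bool" where
  "fin_dim scale S \<longleftrightarrow> (\<exists>B. finite B \<and> B \<subseteq> S \<and> Modules.module.span scale B = S)"

definition fin_gen_group :: "('g, 'b) monoid_scheme \<Rightarrow> bool" where
  "fin_gen_group H \<longleftrightarrow> (\<exists>S. finite S \<and> S \<subseteq> carrier H \<and> generate H S = carrier H)"

end

theory Submission
  imports Defs
begin

lemma iter_diff_first:
  "iter_diff act (Suc j) x gs = iter_diff act j (act x (gs 0) - x) (\<lambda>i. gs (Suc i))"
  by (induction j) auto

definition UU :: "('g, 'b) monoid_scheme \<Rightarrow> ('a::ab_group_add \<Rightarrow> 'g \<Rightarrow> 'a) \<Rightarrow> nat \<Rightarrow> 'a set" where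
  "UU G act j = {x. \<forall>gs. (\<forall>i<j. gs i \<in> carrier G) \<longrightarrow> iter_diff act j x gs = 0}"

lemma poly_UU: "poly_elems G act n = UU G act (Suc n)"
  unfolding poly_elems_def UU_def by simp

lemma UU_0: "UU G act 0 = {0}"
  unfolding UU_def by auto

lemma UU_Suc:
  "x \<in> UU G act (Suc j) \<longleftrightarrow> (\<forall>g\<in>carrier G. act x g - x \<in> UU G act j)"
proof
  assume x: "x \<in> UU G act (Suc j)"
  show "\<forall>g\<in>carrier G. act x g - x \<in> UU G act j"
  proof (intro ballI)
    fix g assume g: "g \<in> carrier G"
    show "act x g - x \<in> UU G act j"
      unfolding UU_def
    proof (intro CollectI allI impI)
      fix gs :: "nat \<Rightarrow> _" assume gs: "\<forall>i<j. gs i \<in> carrier G"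
      define hs where "hs = (\<lambda>i. if i = 0 then g else gs (i - 1))"
      have "\<forall>i<Suc j. hs i \<in> carrier G" using gs g by (auto simp: hs_def)
      hence "iter_diff act (Suc j) x hs = 0" using x unfolding UU_def by blast
      moreover have "(\<lambda>i. hs (Suc i)) = gs" by (auto simp: hs_def)
      ultimately show "iter_diff act j (act x g - x) gs = 0"
        by (simp only: iter_diff_first) (simp add: hs_def)
    qed
  qed
next
  assume H: "\<forall>g\<in>carrier G. act x g - x \<in> UU G act j"
  show "x \<in> UU G act (Suc j)"
    unfolding UU_def
  proof (intro CollectI allI impI)
    fix gs :: "nat \<Rightarrow> _" assume gs: "\<forall>i<Suc j. gs i \<in> carrier G"
    have "act x (gs 0) - x \<in> UU G act j" using H gs by auto
    hence A: "\<forall>hs. (\<forall>i<j. hs i \<in> carrier G) \<longrightarrow> iter_diff act j (act x (gs 0) - x) hs = 0"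
      unfolding UU_def by simp
    have B: "\<forall>i<j. gs (Suc i) \<in> carrier G" using gs by auto
    have "iter_diff act j (act x (gs 0) - x) (\<lambda>i. gs (Suc i)) = 0"
      using mp[OF spec[OF A, of "\<lambda>i. gs (Suc i)"] B] .
    then show "iter_diff act (Suc j) x gs = 0"
      by (simp only: iter_diff_first)
  qed
qed

lemma UU_Suc_eq: "UU G act (Suc j) = {x. \<forall>g\<in>carrier G. act x g - x \<in> UU G act j}"
  unfolding set_eq_iff mem_Collect_eq by (rule allI, rule UU_Suc)

lemma lra_linear:
  assumes "linear_right_action scale G act" "g \<in> carrier G"
  shows "act (x + y) g = act x g + act y g" "act (scale c x) g = scale c (act x g)"
    "act (x - y) g = act x g - act y g" "act 0 g = 0"
proof -
  have l: "Vector_Spaces.linear scale scale (\<lambda>a. act a g)"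
    using assms unfolding linear_right_action_def by blast
  then interpret module_hom scale scale "\<lambda>a. act a g"
    using module_hom_iff_linear by blast
  show "act (x + y) g = act x g + act y g" "act (scale c x) g = scale c (act x g)"
    "act (x - y) g = act x g - act y g" "act 0 g = 0"
    by (rule add, rule scale, rule diff, rule zero)
qed

lemma UU_subspace:
  assumes vs: "vector_space scale" and lra: "linear_right_action scale G act"
  shows "module.subspace scale (UU G act j)"
proof (induction j)
  interpret vector_space scale by (rule vs)
  case 0
  then show ?case by (simp add: UU_0 subspace_def)
next
  interpret vector_space scale by (rule vs)
  case (Suc j)
  have eq: "UU G act (Suc j) = {x. \<forall>g\<in>carrier G. act x g - x \<in> UU G act j}"
    by (rule UU_Suc_eq)
  show ?case unfolding eq
  proof (rule subspaceI)
    show "0 \<in> {x. \<forall>g\<in>carrier G. act x g - x \<in> UU G act j}"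
      using lra_linear[OF lra] subspace_0[OF Suc.IH] by auto
  next
    fix x y assume x: "x \<in> {x. \<forall>g\<in>carrier G. act x g - x \<in> UU G act j}"
      and y: "y \<in> {x. \<forall>g\<in>carrier G. act x g - x \<in> UU G act j}"
    show "x + y \<in> {x. \<forall>g\<in>carrier G. act x g - x \<in> UU G act j}"
    proof (intro CollectI ballI)
      fix g assume g: "g \<in> carrier G"
      have e: "act (x + y) g - (x + y) = (act x g - x) + (act y g - y)"
        using lra_linear[OF lra g] by (simp add: algebra_simps)
      have a: "act x g - x \<in> UU G act j" using x g by simp
      have b: "act y g - y \<in> UU G act j" using y g by simp
      show "act (x + y) g - (x + y) \<in> UU G act j"
        unfolding e by (rule subspace_add[OF Suc.IH a b])
    qed
  next
    fix c x assume x: "x \<in> {x. \<forall>g\<in>carrier G. act x g - x \<in> UU G act j}"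
    show "scale c x \<in> {x. \<forall>g\<in>carrier G. act x g - x \<in> UU G act j}"
    proof (intro CollectI ballI)
      fix g assume g: "g \<in> carrier G"
      have e: "act (scale c x) g - scale c x = scale c (act x g - x)"
        using lra_linear[OF lra g] by (simp add: scale_right_diff_distrib)
      have a: "act x g - x \<in> UU G act j" using x g by simp
      show "act (scale c x) g - scale c x \<in> UU G act j"
        unfolding e by (rule subspace_scale[OF Suc.IH a])
    qed
  qed
qed



lemma core:
  fixes G :: "('g, 'b) monoid_scheme" (structure)
  assumes grp: "group G" and vs: "vector_space scale" and lra: "linear_right_action scale G act"
    and gen: "\<forall>H. subgroup H G \<and> S \<subseteq> H \<and> derived_set G (carrier G) \<subseteq> H \<longrightarrow> H = carrier G"
    and Ssub: "S \<subseteq> carrier G"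
    and a: "a \<in> UU G act (Suc m)" and fx: "\<forall>s\<in>S. act a s = a"
  shows "a \<in> invariants G act"
proof -
  interpret group G by (rule grp)
  interpret vector_space scale by (rule vs)
  have act1: "act b \<one> = b" for b using lra unfolding linear_right_action_def by simp
  have actm: "act (act b g) h = act b (g \<otimes> h)" if "g \<in> carrier G" "h \<in> carrier G" for b g h
    using lra that unfolding linear_right_action_def by simp
  define \<phi> where "\<phi> = (\<lambda>g. act a g - a)"
  have step: "\<forall>g\<in>carrier G. \<phi> g \<in> UU G act j"
    if hyp: "\<forall>g\<in>carrier G. \<phi> g \<in> UU G act (Suc j)" for j
  proof -
    define W where "W = UU G act j"
    have W: "subspace W" using UU_subspace[OF vs lra] W_def by simp
    have E: "\<phi> (g \<otimes> h) - \<phi> g - \<phi> h \<in> W" if g: "g \<in> carrier G" and h: "h \<in> carrier G" for g h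
    proof -
      have "\<phi> g \<in> UU G act (Suc j)" using hyp g by simp
      hence "\<forall>h\<in>carrier G. act (\<phi> g) h - \<phi> g \<in> UU G act j" by (simp only: UU_Suc)
      hence 1: "act (\<phi> g) h - \<phi> g \<in> W" using h W_def by simp
      have "act (\<phi> g) h = act (act a g) h - act a h"
        unfolding \<phi>_def by (rule lra_linear(3)[OF lra h])
      hence e: "\<phi> (g \<otimes> h) - \<phi> g - \<phi> h = act (\<phi> g) h - \<phi> g"
        unfolding \<phi>_def actm[OF g h] by (simp add: algebra_simps)
      show ?thesis unfolding e by (rule 1)
    qed
    have one: "\<phi> \<one> = 0" unfolding \<phi>_def act1 by simp
    have inv: "\<phi> (inv g) + \<phi> g \<in> W" if g: "g \<in> carrier G" for g
    proof -
      have "\<phi> (g \<otimes> inv g) - \<phi> g - \<phi> (inv g) \<in> W" using E[OF g inv_closed[OF g]] .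
      hence "- (\<phi> (g \<otimes> inv g) - \<phi> g - \<phi> (inv g)) \<in> W" by (rule subspace_neg[OF W])
      moreover have "- (\<phi> (g \<otimes> inv g) - \<phi> g - \<phi> (inv g)) = \<phi> (inv g) + \<phi> g"
        using g one by (simp add: algebra_simps)
      ultimately show ?thesis by simp
    qed
    define N where "N = {g\<in>carrier G. \<phi> g \<in> W}"
    have sg: "subgroup N G"
    proof (rule subgroupI)
      show "N \<subseteq> carrier G" unfolding N_def by auto
      show "N \<noteq> {}" using one subspace_0[OF W] unfolding N_def by auto
    next
      fix g assume "g \<in> N"
      hence g: "g \<in> carrier G" "\<phi> g \<in> W" unfolding N_def by auto
      have "(\<phi> (inv g) + \<phi> g) - \<phi> g \<in> W" by (rule subspace_diff[OF W inv[OF g(1)] g(2)])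
      thus "inv g \<in> N" using g unfolding N_def by simp
    next
      fix g h assume "g \<in> N" "h \<in> N"
      hence g: "g \<in> carrier G" "\<phi> g \<in> W" and h: "h \<in> carrier G" "\<phi> h \<in> W" unfolding N_def by auto
      have "(\<phi> (g \<otimes> h) - \<phi> g - \<phi> h) + \<phi> g + \<phi> h \<in> W"
        by (rule subspace_add[OF W subspace_add[OF W E[OF g(1) h(1)] g(2)] h(2)])
      thus "g \<otimes> h \<in> N" using g h unfolding N_def by simp
    qed
    have SN: "S \<subseteq> N"
    proof
      fix s assume s: "s \<in> S"
      have "\<phi> s = 0" using fx s unfolding \<phi>_def by simp
      thus "s \<in> N" using s Ssub subspace_0[OF W] unfolding N_def by auto
    qed
    have DN: "derived_set G (carrier G) \<subseteq> N"
    proof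
      fix c assume "c \<in> derived_set G (carrier G)"
      then obtain h1 h2 where h1: "h1 \<in> carrier G" and h2: "h2 \<in> carrier G"
        and c: "c = h1 \<otimes> h2 \<otimes> inv h1 \<otimes> inv h2" by blast
      define x3 where "x3 = h1 \<otimes> h2 \<otimes> inv h1"
      have x3: "x3 \<in> carrier G" unfolding x3_def using h1 h2 by simp
      have cc: "c = x3 \<otimes> inv h2" unfolding c x3_def ..
      have E1: "\<phi> c - \<phi> x3 - \<phi> (inv h2) \<in> W" unfolding cc using E[OF x3 inv_closed[OF h2]] .
      have E2: "\<phi> x3 - \<phi> (h1 \<otimes> h2) - \<phi> (inv h1) \<in> W" unfolding x3_def using E[OF m_closed[OF h1 h2] inv_closed[OF h1]] .
      have E3: "\<phi> (h1 \<otimes> h2) - \<phi> h1 - \<phi> h2 \<in> W" using E[OF h1 h2] .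
      have sum: "(\<phi> c - \<phi> x3 - \<phi> (inv h2)) + (\<phi> x3 - \<phi> (h1 \<otimes> h2) - \<phi> (inv h1))
          + (\<phi> (h1 \<otimes> h2) - \<phi> h1 - \<phi> h2) + (\<phi> (inv h1) + \<phi> h1) + (\<phi> (inv h2) + \<phi> h2) \<in> W"
        by (intro subspace_add[OF W] E1 E2 E3 inv h1 h2)
      have "\<phi> c \<in> W" using sum by (simp add: algebra_simps)
      moreover have "c \<in> carrier G" unfolding cc using x3 h2 by simp
      ultimately show "c \<in> N" unfolding N_def by simp
    qed
    have "N = carrier G" using gen sg SN DN by blast
    thus ?thesis unfolding N_def W_def by auto
  qed
  have ind: "\<forall>g\<in>carrier G. \<phi> g \<in> UU G act (m - k)" if "k \<le> m" for k
    using that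
  proof (induction k)
    case 0
    then show ?case using a unfolding \<phi>_def by (simp only: UU_Suc diff_zero)
  next
    case (Suc k)
    have "m - k = Suc (m - Suc k)" using Suc.prems by simp
    then show ?case using step Suc by simp
  qed
  have "\<forall>g\<in>carrier G. \<phi> g \<in> UU G act 0" using ind[of m] by simp
  thus ?thesis unfolding UU_0 invariants_def \<phi>_def by simp
qed



lemma fin_dim_kernel:
  assumes vs: "vector_space scale" and V: "module.subspace scale V"
    and lin: "Vector_Spaces.linear scale scale f" and fV: "f ` V \<subseteq> W"
    and W: "fin_dim scale W" and K: "fin_dim scale {x\<in>V. f x = 0}"
  shows "fin_dim scale V"
proof -
  interpret vector_space scale by (rule vs)
  interpret fh: module_hom scale scale f using lin module_hom_iff_linear by blast
  obtain B where B: "finite B" "B \<subseteq> W" "span B = W" using W unfolding fin_dim_def by blast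
  obtain C where C: "C \<subseteq> f ` V" "independent C" "f ` V \<subseteq> span C"
    using basis_exists[of "f ` V"] by metis
  have "C \<subseteq> span B" using C(1) fV B(3) by simp
  hence fC: "finite C" using independent_span_bound[OF B(1) C(2)] by simp
  obtain C' where C': "C' \<subseteq> V" "finite C'" "C = f ` C'"
    using finite_subset_image[OF fC C(1)] by metis
  obtain D where D: "finite D" "D \<subseteq> {x\<in>V. f x = 0}" "span D = {x\<in>V. f x = 0}"
    using K unfolding fin_dim_def by blast
  show ?thesis unfolding fin_dim_def
  proof (intro exI conjI)
    show "finite (C' \<union> D)" using C'(2) D(1) by simp
    show "C' \<union> D \<subseteq> V" using C'(1) D(2) by auto
    show "span (C' \<union> D) = V"
    proof
      show "span (C' \<union> D) \<subseteq> V" by (rule span_minimal[OF _ V]) (use C'(1) D(2) in auto)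
      show "V \<subseteq> span (C' \<union> D)"
      proof
        fix v assume v: "v \<in> V"
        have "f v \<in> span C" using C(3) v by auto
        also have "span C = f ` span C'" unfolding C'(3) by (rule fh.span_image)
        finally obtain u where u: "u \<in> span C'" "f v = f u" by auto
        have uV: "u \<in> V" using u(1) span_minimal[OF C'(1) V] by auto
        have "v - u \<in> V" by (rule subspace_diff[OF V v uV])
        moreover have "f (v - u) = 0" using u(2) fh.diff by simp
        ultimately have "v - u \<in> span D" using D(3) by simp
        hence 1: "v - u \<in> span (C' \<union> D)" using span_mono[of D "C' \<union> D"] by auto
        have 2: "u \<in> span (C' \<union> D)" using u(1) span_mono[of C' "C' \<union> D"] by auto
        have "u + (v - u) \<in> span (C' \<union> D)" by (rule span_add[OF 2 1])
        thus "v \<in> span (C' \<union> D)" by simp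
      qed
    qed
  qed
qed

lemma gen_lemma:
  fixes G :: "('g, 'b) monoid_scheme" (structure)
  assumes grp: "group G" and fg: "fin_gen_group (G Mod (derived G (carrier G)))"
  shows "\<exists>S. finite S \<and> S \<subseteq> carrier G \<and>
    (\<forall>H. subgroup H G \<and> S \<subseteq> H \<and> derived_set G (carrier G) \<subseteq> H \<longrightarrow> H = carrier G)"
proof -
  interpret group G by (rule grp)
  define N where "N = derived G (carrier G)"
  interpret nN: normal N G unfolding N_def by (rule derived_self_is_normal)
  have hom: "group_hom G (G Mod N) (\<lambda>a. N #> a)"
    unfolding group_hom_def group_hom_axioms_def
    using nN.factorgroup_is_group nN.r_coset_hom_Mod grp by simp
  interpret ph: group_hom G "G Mod N" "\<lambda>a. N #> a" by (rule hom)
  obtain T where T: "finite T" "T \<subseteq> carrier (G Mod N)" "generate (G Mod N) T = carrier (G Mod N)"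
    using fg unfolding fin_gen_group_def N_def by blast
  have "\<forall>t\<in>T. \<exists>x. x \<in> carrier G \<and> t = N #> x"
    using T(2) unfolding FactGroup_def RCOSETS_def by auto
  from bchoice[OF this] obtain rep where rep0: "\<forall>t\<in>T. rep t \<in> carrier G \<and> t = N #> rep t"
    by (elim exE)
  have rep: "rep t \<in> carrier G \<and> t = N #> rep t" if "t \<in> T" for t using rep0 that by simp
  define S where "S = rep ` T"
  have SG: "S \<subseteq> carrier G" unfolding S_def using rep by auto
  have "(\<lambda>t. N #> rep t) ` T = (\<lambda>t. t) ` T"
    by (rule image_cong[OF refl]) (use rep in simp)
  hence imgS: "(\<lambda>a. N #> a) ` S = T" unfolding S_def image_image by simp
  show ?thesis
  proof (intro exI conjI allI impI)
    show "finite S" unfolding S_def using T(1) by simp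
    show "S \<subseteq> carrier G" by (rule SG)
    fix H assume H: "subgroup H G \<and> S \<subseteq> H \<and> derived_set G (carrier G) \<subseteq> H"
    have Hs: "subgroup H G" and SH: "S \<subseteq> H" and DH: "derived_set G (carrier G) \<subseteq> H"
      using H by simp_all
    have NH: "N \<subseteq> H" unfolding N_def derived_def
      by (rule generate_subgroup_incl[OF DH Hs])
    show "H = carrier G"
    proof
      show "H \<subseteq> carrier G" by (rule subgroup.subset[OF Hs])
      show "carrier G \<subseteq> H"
      proof
        fix g assume g: "g \<in> carrier G"
        have "N #> g \<in> carrier (G Mod N)" using ph.hom_closed[OF g] .
        also have "carrier (G Mod N) = generate (G Mod N) ((\<lambda>a. N #> a) ` S)" using T(3) imgS by simp
        also have "\<dots> = (\<lambda>a. N #> a) ` generate G S" by (rule ph.generate_img[OF SG])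
        also have "\<dots> \<subseteq> (\<lambda>a. N #> a) ` H"
          by (rule image_mono[OF generate_subgroup_incl[OF SH Hs]])
        finally obtain h where h: "h \<in> H" "N #> g = N #> h" by auto
        have "g \<in> N #> g" by (rule rcos_self[OF g nN.subgroup_axioms])
        hence "g \<in> N #> h" using h(2) by simp
        then obtain n where n: "n \<in> N" "g = n \<otimes> h" unfolding r_coset_def by auto
        show "g \<in> H" unfolding n(2) by (rule subgroup.m_closed[OF Hs subsetD[OF NH n(1)] h(1)])
      qed
    qed
  qed
qed



theorem mainTheorem1:
  fixes scale :: "'f::field_char_0 \<Rightarrow> 'a::ab_group_add \<Rightarrow> 'a"
    and G :: "('g, 'b) monoid_scheme"
    and act :: "'a \<Rightarrow> 'g \<Rightarrow> 'a"
  assumes "vector_space scale"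
    and "group G"
    and "fin_gen_group (G Mod (derived G (carrier G)))"
    and "linear_right_action scale G act"
    and "fin_dim scale (invariants G act)"
  shows "\<forall>n::nat. fin_dim scale (poly_elems G act n)"
proof -
  note vs = assms(1) and grp = assms(2) and lra = assms(4)
  interpret vector_space scale by (rule vs)
  obtain S where S: "finite S" "S \<subseteq> carrier G"
    and gen: "\<forall>H. subgroup H G \<and> S \<subseteq> H \<and> derived_set G (carrier G) \<subseteq> H \<longrightarrow> H = carrier G"
    using gen_lemma[OF assms(2,3)] by (elim exE conjE)
  have P0: "UU G act (Suc 0) = invariants G act"
    unfolding set_eq_iff by (simp add: UU_Suc UU_0 invariants_def)
  have inv_sub: "invariants G act \<subseteq> UU G act (Suc k)" for k
  proof
    fix x assume x: "x \<in> invariants G act"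
    have "\<forall>g\<in>carrier G. act x g - x \<in> UU G act k"
      using x subspace_0[OF UU_subspace[OF vs lra]] unfolding invariants_def by simp
    thus "x \<in> UU G act (Suc k)" by (simp only: UU_Suc)
  qed
  have "fin_dim scale (UU G act (Suc n))" for n
  proof (induction n)
    case 0
    then show ?case using P0 assms(5) by simp
  next
    case (Suc n)
    define Q where "Q T = {a \<in> UU G act (Suc (Suc n)). \<forall>s\<in>S. s \<notin> T \<longrightarrow> act a s = a}" for T
    have QT: "fin_dim scale (Q T)" if "T \<subseteq> S" for T
    proof -
      have fT: "finite T" using finite_subset[OF that S(1)] .
      show ?thesis using fT that
      proof (induction T rule: finite_subset_induct)
        case empty
        have "Q {} = invariants G act"
        proof
          show "Q {} \<subseteq> invariants G act"
          proof
            fix a assume "a \<in> Q {}"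
            hence a: "a \<in> UU G act (Suc (Suc n))" "\<forall>s\<in>S. act a s = a" unfolding Q_def by auto
            show "a \<in> invariants G act" by (rule core[OF grp vs lra gen S(2) a])
          qed
          show "invariants G act \<subseteq> Q {}"
            using inv_sub[of "Suc n"] S(2) unfolding Q_def invariants_def by auto
        qed
        then show ?case using assms(5) by simp
      next
        case (insert t T)
        have tG: "t \<in> carrier G" using insert.hyps(2) S(2) by auto
        have V: "subspace (Q (insert t T))"
        proof (rule subspaceI)
          show "0 \<in> Q (insert t T)"
            unfolding Q_def using subspace_0[OF UU_subspace[OF vs lra]] lra_linear(4)[OF lra] S(2) by auto
        next
          fix x y assume x: "x \<in> Q (insert t T)" and y: "y \<in> Q (insert t T)"
          have "x + y \<in> UU G act (Suc (Suc n))"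
            using x y subspace_add[OF UU_subspace[OF vs lra]] unfolding Q_def by simp
          moreover have "act (x + y) s = x + y" if "s \<in> S" "s \<notin> insert t T" for s
            using x y that lra_linear(1)[OF lra, of s x y] S(2) unfolding Q_def by auto
          ultimately show "x + y \<in> Q (insert t T)" unfolding Q_def by auto
        next
          fix c x assume x: "x \<in> Q (insert t T)"
          have "scale c x \<in> UU G act (Suc (Suc n))"
            using x subspace_scale[OF UU_subspace[OF vs lra]] unfolding Q_def by simp
          moreover have "act (scale c x) s = scale c x" if "s \<in> S" "s \<notin> insert t T" for s
            using x that lra_linear(2)[OF lra, of s c x] S(2) unfolding Q_def by auto
          ultimately show "scale c x \<in> Q (insert t T)" unfolding Q_def by auto
        qed
        have lin: "Vector_Spaces.linear scale scale (\<lambda>x. act x t - x)"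
          apply (rule iffD2[OF Vector_Spaces.linear_iff])
          using vs lra_linear[OF lra tG] by (simp add: algebra_simps scale_right_diff_distrib)
        have img: "(\<lambda>x. act x t - x) ` Q (insert t T) \<subseteq> UU G act (Suc n)"
        proof
          fix y assume "y \<in> (\<lambda>x. act x t - x) ` Q (insert t T)"
          then obtain x where x: "x \<in> Q (insert t T)" "y = act x t - x" by auto
          have "x \<in> UU G act (Suc (Suc n))" using x(1) unfolding Q_def by simp
          hence "\<forall>g\<in>carrier G. act x g - x \<in> UU G act (Suc n)" by (simp only: UU_Suc)
          thus "y \<in> UU G act (Suc n)" using x(2) tG by simp
        qed
        have ker: "{x \<in> Q (insert t T). act x t - x = 0} = Q T"
          unfolding Q_def using insert.hyps(2,3) by auto
        show ?case
          by (rule fin_dim_kernel[OF vs V lin img Suc.IH]) (simp only: ker insert.IH)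
      qed
    qed
    have QS: "Q S = UU G act (Suc (Suc n))" unfolding Q_def by auto
    have fQ: "fin_dim scale (Q S)" by (rule QT[OF order_refl])
    then show ?case unfolding QS .
  qed
  thus ?thesis by (simp add: poly_UU)
qed

end
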